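(* Let $s\geq 1$, let $q$ be a prime power and let $C^{(1)},\ldots,C^{(s)}\in\mathbb{F}_q^{\mathbb{N}\times\mathbb{N}_0}$ be finite-row generating matrices. Let $(s_n)_{n\geq 0}$ be a sequence of $q$-adic integers that is uniformly distributed in $\mathbb{Z}_q$. Suppose that the matrices $C^{(1)},\ldots,C^{(s)}$ generate a uniformly distributed sequence in $[0,1]^s$ via Algorithm 1 (for some admissible choice of the bijections). Then, for every choice of bijections $\psi_r$ ($r\geq 0$) and $\lambda_{i,j}$, Algorithm 2 applied with these matrices and the input sequence $(s_n)_{n\geq 0}$ produces a uniformly distributed sequence in $[0,1]^s$.
   Context: $\mathbb{F}_q$ is the finite field with $q$ elements, $D_q=\{0,1,\ldots,q-1\}$. $\mathbb{Z}_q$ is the ring of $q$-adic integers; every $z\in\mathbb{Z}_q$ has a unique representation $z=\sum_{r\geq 0}a_rq^r$ with $a_r\in D_q$ (for nonnegative integers this is the base-$q$ expansion), and $\tau_k(z)=\sum_{r=0}^{k-1}a_rq^r$. A sequence $(x_n)_{n\ge0}$ in $\mathbb{Z}_q$ is uniformly distributed in $\mathbb{Z}_q$ if for every $k\geq 1$ and every $0\leq a<q^k$, $\lim_{N\to\infty}\frac1N\#\{0\le n<N:\tau_k(x_n)\equiv a \pmod{q^k}\}=q^{-k}$. A generating matrix $C^{(i)}=(c^{(i)}_{j,r})_{j\geq1,r\geq0}$ over $\mathbb{F}_q$ is finite-row if each row has only finitely many nonzero entries. Algorithm 2: choose bijections $\psi_r:D_q\to\mathbb{F}_q$ ($r\ge0$),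 finite-row matrices $C^{(1)},\dots,C^{(s)}$, bijections $\lambda_{i,j}:\mathbb{F}_q\to D_q$ ($1\le i\le s$, $j\ge1$), and a sequence $(s_n)_{n\ge0}$ in $\mathbb{Z}_q$. Writing $s_n=\sum_{r\ge0}a_rq^r$, set $x_n^{(i)}=\sum_{j\ge1}\lambda_{i,j}\big(\sum_{r\ge0}c^{(i)}_{j,r}\psi_r(a_r)\big)q^{-j}$ and $\boldsymbol{x}_n=(x_n^{(1)},\ldots,x_n^{(s)})\in[0,1]^s$. Algorithm 1 is the same construction with $s_n=n$ for all $n$ and with the bijections $\psi_r$ required to satisfy $\psi_r(0)=0$ for all sufficiently large $r$. The star discrepancy of points $\boldsymbol{x}_0,\dots,\boldsymbol{x}_{N-1}\in[0,1]^s$ is $\sup_J|A(J)/N-\mathrm{vol}(J)|$, the supremum over subintervals $J\subseteq[0,1]^s$ with one vertex at the origin, $A(J)$ the number of $n<N$ with $\boldsymbol{x}_n\in J$; a sequence is uniformly distributed if the star discrepancy of its first $N$ terms tends to $0$ as $N\to\infty$. *)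

theory Defs
  imports "HOL-Analysis.Analysis"
begin

text \<open>The finite field F_q is a type 'f of class {field, finite}; q = CARD('f).
  D_q = {..<q}. A q-adic integer is represented by its digit sequence
  a :: nat => nat with a r < q for all r.\<close>

definition qadic_digits :: "nat \<Rightarrow> (nat \<Rightarrow> nat) \<Rightarrow> bool" where
  "qadic_digits q a \<longleftrightarrow> (\<forall>r. a r < q)"

definition tau :: "nat \<Rightarrow> nat \<Rightarrow> (nat \<Rightarrow> nat) \<Rightarrow> nat" where
  "tau q k a = (\<Sum>r<k. a r * q ^ r)"

definition ud_qadic :: "nat \<Rightarrow> (nat \<Rightarrow> nat \<Rightarrow> nat) \<Rightarrow> bool" where
  "ud_qadic q sn \<longleftrightarrow>
     (\<forall>k\<ge>1. \<forall>a<q ^ k.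
        (\<lambda>N. real (card {n. n < N \<and> tau q k (sn n) mod q ^ k = a mod q ^ k}) / real N)
          \<longlonglongrightarrow> 1 / real q ^ k)"

definition nat_digits :: "nat \<Rightarrow> nat \<Rightarrow> nat \<Rightarrow> nat" where
  "nat_digits q n r = n div q ^ r mod q"

text \<open>Generating matrices: C i j r for component i < s (0-based), row j >= 1, column r >= 0.\<close>
definition finite_row :: "(nat \<Rightarrow> nat \<Rightarrow> 'f::zero) \<Rightarrow> bool" where
  "finite_row M \<longleftrightarrow> (\<forall>j\<ge>1. finite {r. M j r \<noteq> 0})"

text \<open>The i-th coordinate of the point generated (Algorithm 1/2) from the input
  q-adic integer with digit sequence a.\<close>
definition gen_coord ::
  "(nat \<Rightarrow> nat \<Rightarrow> nat \<Rightarrow> 'f::{field,finite}) \<Rightarrow> (nat \<Rightarrow> nat \<Rightarrow> 'f)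
    \<Rightarrow> (nat \<Rightarrow> nat \<Rightarrow> 'f \<Rightarrow> nat) \<Rightarrow> (nat \<Rightarrow> nat) \<Rightarrow> nat \<Rightarrow> real" where
  "gen_coord C psi lam a i =
     (\<Sum>j. real (lam i (Suc j) (\<Sum>r\<in>{r. C i (Suc j) r \<noteq> 0}. C i (Suc j) r * psi r (a r)))
            / real CARD('f) ^ Suc j)"

definition star_discrepancy :: "nat \<Rightarrow> (nat \<Rightarrow> nat \<Rightarrow> real) \<Rightarrow> nat \<Rightarrow> real" where
  "star_discrepancy s x N =
     (SUP t\<in>{t. \<forall>i<s. 0 \<le> t i \<and> t i \<le> 1}.
        \<bar>real (card {n. n < N \<and> (\<forall>i<s. 0 \<le> x n i \<and> x n i < t i)}) / real N
          - (\<Prod>i<s. t i)\<bar>)"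

definition ud_cube :: "nat \<Rightarrow> (nat \<Rightarrow> nat \<Rightarrow> real) \<Rightarrow> bool" where
  "ud_cube s x \<longleftrightarrow> (\<lambda>N. star_discrepancy s x N) \<longlonglongrightarrow> 0"

end

theory Submission
  imports Defs
begin

primrec enc :: "nat \<Rightarrow> nat \<Rightarrow> (nat \<Rightarrow> nat) \<Rightarrow> nat" where
  "enc q 0 d = 0"
| "enc q (Suc m) d = q * enc q m d + d m"

lemma enc_cong: "(\<And>j. j < m \<Longrightarrow> d j = d' j) \<Longrightarrow> enc q m d = enc q m d'"
  by (induction m) auto

lemma enc_less: "(\<And>j. j < m \<Longrightarrow> d j < q) \<Longrightarrow> enc q m d < q ^ m"
proof (induction m)
  case 0 then show ?case by simp
next
  case (Suc m)
  then have e: "enc q m d + 1 \<le> q ^ m" by simp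
  have "q * enc q m d + d m < q * enc q m d + q" using Suc by simp
  also have "\<dots> = q * (enc q m d + 1)" by simp
  also have "\<dots> \<le> q * q ^ m" using e by (rule mult_le_mono2)
  finally show ?case by simp
qed

lemma enc_inj: "0 < q \<Longrightarrow> (\<And>j. j < m \<Longrightarrow> d j < q) \<Longrightarrow> (\<And>j. j < m \<Longrightarrow> d' j < q)
  \<Longrightarrow> enc q m d = enc q m d' \<Longrightarrow> j < m \<Longrightarrow> d j = d' j"
proof (induction m arbitrary: j)
  case 0 then show ?case by simp
next
  case (Suc m)
  have "(q * enc q m d + d m) mod q = (q * enc q m d' + d' m) mod q"
    using Suc.prems by simp
  then have dm: "d m = d' m" using Suc.prems by simp
  then have "q * enc q m d = q * enc q m d'" using Suc.prems by simp
  then have "enc q m d = enc q m d'" using Suc.prems by simp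
  then show ?case using Suc.IH[of j] Suc.prems dm by (cases "j = m") auto
qed

lemma enc_surj: "0 < q \<Longrightarrow> p < q ^ m \<Longrightarrow> \<exists>d. (\<forall>j<m. d j < q) \<and> enc q m d = p"
proof (induction m arbitrary: p)
  case 0 then show ?case by simp
next
  case (Suc m)
  have "p div q < q ^ m" using Suc.prems
    by (simp add: less_mult_imp_div_less mult.commute)
  then obtain d where d: "\<forall>j<m. d j < q" "enc q m d = p div q" using Suc by blast
  define d' where "d' = d(m := p mod q)"
  have "enc q m d' = enc q m d" by (rule enc_cong) (simp add: d'_def)
  then have "enc q (Suc m) d' = p" using d by (simp add: d'_def)
  moreover have "\<forall>j<Suc m. d' j < q" using d Suc.prems by (simp add: d'_def less_Suc_eq)
  ultimately show ?case by blast
qed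

lemma enc_real: "real (enc q m d) / real q ^ m = (\<Sum>j<m. real (d j) / real q ^ Suc j)" if "q > 0"
proof (induction m)
  case 0 then show ?case by simp
next
  case (Suc m)
  have "real (enc q (Suc m) d) / real q ^ Suc m
      = real (enc q m d) / real q ^ m + real (d m) / real q ^ Suc m"
    using that by (simp add: field_simps)
  then show ?case using Suc by simp
qed

lemma tau_shift: "tau q (Suc L) d = d 0 + q * tau q L (\<lambda>r. d (Suc r))"
  unfolding tau_def sum.lessThan_Suc_shift by (simp add: sum_distrib_left algebra_simps)

lemma nat_digits_Suc: "nat_digits q a (Suc r) = nat_digits q (a div q) r"
  unfolding nat_digits_def by (simp add: div_mult2_eq)

lemma tau_less: "(\<And>r. r < L \<Longrightarrow> d r < q) \<Longrightarrow> tau q L d < q ^ L"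
proof (induction L arbitrary: d)
  case 0 then show ?case by (simp add: tau_def)
next
  case (Suc L)
  have "tau q L (\<lambda>r. d (Suc r)) + 1 \<le> q ^ L" using Suc by (simp add: Suc_le_eq)
  moreover have "d 0 < q" using Suc by simp
  ultimately have "d 0 + q * tau q L (\<lambda>r. d (Suc r)) < q * q ^ L"
  proof -
    assume a: "tau q L (\<lambda>r. d (Suc r)) + 1 \<le> q ^ L" "d 0 < q"
    have "d 0 + q * tau q L (\<lambda>r. d (Suc r)) < q + q * tau q L (\<lambda>r. d (Suc r))" using a by simp
    also have "\<dots> = q * (tau q L (\<lambda>r. d (Suc r)) + 1)" by simp
    also have "\<dots> \<le> q * q ^ L" using a(1) by (rule mult_le_mono2)
    finally show ?thesis .
  qed
  then show ?case by (simp add: tau_shift)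
qed

lemma digits_tau: "(\<And>r. r < L \<Longrightarrow> d r < q) \<Longrightarrow> r < L \<Longrightarrow> nat_digits q (tau q L d) r = d r"
proof (induction L arbitrary: d r)
  case 0 then show ?case by simp
next
  case (Suc L)
  have d0: "d 0 < q" using Suc by simp
  show ?case
  proof (cases r)
    case 0 then show ?thesis using d0 by (simp add: tau_shift nat_digits_def)
  next
    case (Suc r')
    have "(d 0 + q * tau q L (\<lambda>r. d (Suc r))) div q = tau q L (\<lambda>r. d (Suc r))"
      using d0 by simp
    then show ?thesis using Suc.prems Suc.IH[of "\<lambda>r. d (Suc r)" r'] Suc
      by (simp add: tau_shift nat_digits_Suc)
  qed
qed

lemma tau_digits: "0 < q \<Longrightarrow> a < q ^ L \<Longrightarrow> tau q L (nat_digits q a) = a"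
proof (induction L arbitrary: a)
  case 0 then show ?case by (simp add: tau_def)
next
  case (Suc L)
  have "a div q < q ^ L" using Suc.prems by (simp add: less_mult_imp_div_less mult.commute)
  then have "tau q L (nat_digits q (a div q)) = a div q" using Suc.IH Suc.prems(1) by blast
  moreover have "tau q (Suc L) (nat_digits q a) = nat_digits q a 0 + q * tau q L (nat_digits q (a div q))"
    by (simp only: tau_shift nat_digits_Suc)
  moreover have "nat_digits q a 0 = a mod q" by (simp add: nat_digits_def)
  ultimately show ?case by (simp only: mod_mult_div_eq)
qed

lemma digit_expansion:
  fixes d :: "nat \<Rightarrow> nat" and q :: nat
  assumes q2: "q \<ge> 2" and dq: "\<And>j. d j < q"
  defines "x \<equiv> (\<Sum>j. real (d j) / real q ^ Suc j)"
  shows "real (enc q m d) / real q ^ m \<le> x" "x \<le> (real (enc q m d) + 1) / real q ^ m"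
proof -
  let ?f = "\<lambda>j. real (d j) / real q ^ Suc j"
  let ?g = "\<lambda>j. (real q - 1) / real q * (1 / real q) ^ j"
  have qpos: "real q > 0" "real q \<ge> 2" using q2 by auto
  have fg: "?f j \<le> ?g j" for j
  proof -
    have "real (d j) \<le> real q - 1" using dq[of j] by (simp add: of_nat_diff[symmetric] Suc_le_eq[symmetric])
    then have "?f j \<le> (real q - 1) / real q ^ Suc j"
      by (simp add: divide_right_mono qpos)
    also have "\<dots> = ?g j" by (simp add: power_divide field_simps)
    finally show ?thesis .
  qed
  have f0: "0 \<le> ?f j" for j by simp
  have sg: "summable ?g" using qpos by (intro summable_mult summable_geometric) simp
  have sf: "summable ?f" by (rule summable_comparison_test[OF _ sg]) (use fg in auto)
  have split: "x = (\<Sum>j. ?f (j + m)) + (\<Sum>j<m. ?f j)"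
    unfolding x_def by (rule suminf_split_initial_segment[OF sf])
  have pre: "(\<Sum>j<m. ?f j) = real (enc q m d) / real q ^ m"
    using enc_real[of q m d] q2 by simp
  have st: "summable (\<lambda>j. ?f (j + m))" by (rule summable_ignore_initial_segment[OF sf])
  have sgt: "summable (\<lambda>j. ?g (j + m))" by (rule summable_ignore_initial_segment[OF sg])
  have t0: "0 \<le> (\<Sum>j. ?f (j + m))" by (rule suminf_nonneg[OF st]) simp
  have "(\<Sum>j. ?f (j + m)) \<le> (\<Sum>j. ?g (j + m))"
    by (rule suminf_le[OF _ st sgt]) (use fg in auto)
  also have "(\<Sum>j. ?g (j + m)) = (real q - 1) / real q * (1 / real q) ^ m * (\<Sum>j. (1 / real q) ^ j)"
    by (subst suminf_mult[symmetric]) (use qpos in \<open>auto intro: summable_geometric simp: power_add mult_ac\<close>)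
  also have "(\<Sum>j. (1 / real q) ^ j) = 1 / (1 - 1 / real q)"
    by (rule suminf_geometric) (use qpos in simp)
  also have "(real q - 1) / real q * (1 / real q) ^ m * (1 / (1 - 1 / real q)) = 1 / real q ^ m"
    using qpos by (simp add: field_simps power_divide)
  finally have t1: "(\<Sum>j. ?f (j + m)) \<le> 1 / real q ^ m" .
  show "real (enc q m d) / real q ^ m \<le> x" using split pre t0 by simp
  show "x \<le> (real (enc q m d) + 1) / real q ^ m" using split pre t1 by (simp add: add_divide_distrib)
qed

lemma prod_diff_bound:
  fixes a b :: "nat \<Rightarrow> real"
  assumes "finite A" "\<And>i. i \<in> A \<Longrightarrow> 0 \<le> a i \<and> a i \<le> 1" "\<And>i. i \<in> A \<Longrightarrow> 0 \<le> b i \<and> b i \<le> 1"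
  shows "\<bar>(\<Prod>i\<in>A. a i) - (\<Prod>i\<in>A. b i)\<bar> \<le> (\<Sum>i\<in>A. \<bar>a i - b i\<bar>)"
  using assms
proof (induction A rule: finite_induct)
  case empty then show ?case by simp
next
  case (insert x F)
  let ?A = "\<Prod>i\<in>F. a i" and ?B = "\<Prod>i\<in>F. b i"
  have A01: "0 \<le> ?A" "?A \<le> 1" using insert by (auto intro: prod_nonneg prod_le_1)
  have B01: "0 \<le> ?B" "?B \<le> 1" using insert by (auto intro: prod_nonneg prod_le_1)
  have ax: "0 \<le> a x" "a x \<le> 1" "0 \<le> b x" "b x \<le> 1" using insert by auto
  have IH: "\<bar>?A - ?B\<bar> \<le> (\<Sum>i\<in>F. \<bar>a i - b i\<bar>)" using insert by auto
  have "a x * ?A - b x * ?B = (a x - b x) * ?A + b x * (?A - ?B)" by algebra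
  then have "\<bar>a x * ?A - b x * ?B\<bar> = \<bar>(a x - b x) * ?A + b x * (?A - ?B)\<bar>" by simp
  also have "\<dots> \<le> \<bar>(a x - b x) * ?A\<bar> + \<bar>b x * (?A - ?B)\<bar>" by (rule abs_triangle_ineq)
  also have "\<dots> = \<bar>a x - b x\<bar> * ?A + b x * \<bar>?A - ?B\<bar>" using A01 ax by (simp add: abs_mult)
  finally have c1: "\<bar>a x * ?A - b x * ?B\<bar> \<le> \<bar>a x - b x\<bar> * ?A + b x * \<bar>?A - ?B\<bar>" .
  have c2: "\<bar>a x - b x\<bar> * ?A \<le> \<bar>a x - b x\<bar>" by (rule mult_left_le) (use A01 in auto)
  have c3: "b x * \<bar>?A - ?B\<bar> \<le> \<bar>?A - ?B\<bar>" by (rule mult_left_le_one_le) (use ax in auto)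
  show ?case using insert c1 c2 c3 IH by simp
qed

lemma prod_neg: "finite X \<Longrightarrow> (\<Prod>i\<in>X. - (u i :: real)) = (-1) ^ card X * (\<Prod>i\<in>X. u i)"
  by (induction X rule: finite_induct) auto

lemma incl_excl_prod:
  fixes u v :: "nat \<Rightarrow> real"
  assumes "finite A"
  shows "(\<Prod>i\<in>A. v i - u i) = (\<Sum>X\<in>Pow A. (-1) ^ card X * (\<Prod>i\<in>A. if i \<in> X then u i else v i))"
proof -
  have "(\<Prod>i\<in>A. v i - u i) = (\<Prod>i\<in>A. - u i + v i)" by simp
  also have "\<dots> = (\<Sum>X\<in>Pow A. (\<Prod>i\<in>X. - u i) * (\<Prod>i\<in>A - X. v i))"
    by (rule prod_add[OF assms])
  also have "\<dots> = (\<Sum>X\<in>Pow A. (-1) ^ card X * (\<Prod>i\<in>A. if i \<in> X then u i else v i))"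
  proof (rule sum.cong[OF refl])
    fix X assume X: "X \<in> Pow A"
    then have fX: "finite X" using assms finite_subset by auto
    have "(\<Prod>i\<in>A. if i \<in> X then u i else v i) = (\<Prod>i\<in>A \<inter> {i. i \<in> X}. u i) * (\<Prod>i\<in>A \<inter> - {i. i \<in> X}. v i)"
      by (rule prod.If_cases[OF assms])
    also have "A \<inter> {i. i \<in> X} = X" using X by auto
    also have "A \<inter> - {i. i \<in> X} = A - X" by auto
    finally show "(\<Prod>i\<in>X. - u i) * (\<Prod>i\<in>A - X. v i) = (-1) ^ card X * (\<Prod>i\<in>A. if i \<in> X then u i else v i)"
      using prod_neg[OF fX, of u] by simp
  qed
  finally show ?thesis .
qed

lemma prod_of_bool: "finite A \<Longrightarrow> (\<Prod>i\<in>A. of_bool (P i) :: real) = of_bool (\<forall>i\<in>A. P i)"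
  by (induction A rule: finite_induct) auto

lemma card_as_sum: fixes N :: nat shows "real (card {n. n < N \<and> P n}) = (\<Sum>n<N. of_bool (P n))"
proof -
  have "{n. n < N \<and> P n} = {..<N} \<inter> {n. P n}" by auto
  moreover have "(\<Sum>n<N. of_bool (P n)) = real (card ({..<N} \<inter> {n. P n}))"
    using sum_of_bool_eq[OF finite_lessThan[of N], of P, where 'a=real] by simp
  ultimately show ?thesis by simp
qed

lemma prod_of_bool_lt: fixes s :: nat shows "(\<Prod>i<s. of_bool (P i) :: real) = of_bool (\<forall>i<s. P i)"
  using prod_of_bool[OF finite_lessThan[of s], of P] by (simp only: lessThan_iff Ball_def)

definition freq :: "nat \<Rightarrow> (nat \<Rightarrow> nat \<Rightarrow> real) \<Rightarrow> (nat \<Rightarrow> real) \<Rightarrow> nat \<Rightarrow> real" where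
  "freq s x t N = real (card {n. n < N \<and> (\<forall>i<s. 0 \<le> x n i \<and> x n i < t i)}) / real N"

lemma freq_le1: "freq s x t N \<le> 1"
proof (cases "N = 0")
  case False
  have "card {n. n < N \<and> (\<forall>i<s. 0 \<le> x n i \<and> x n i < t i)} \<le> card {..<N}"
    by (rule card_mono) auto
  then show ?thesis using False by (simp add: freq_def)
qed (simp add: freq_def)

lemma freq_ge0: "freq s x t N \<ge> 0" by (simp add: freq_def)

lemma disc_upper:
  fixes t :: "nat \<Rightarrow> real"
  assumes "\<forall>i<s. 0 \<le> t i \<and> t i \<le> 1"
  shows "\<bar>freq s x t N - (\<Prod>i<s. t i)\<bar> \<le> star_discrepancy s x N"
  unfolding star_discrepancy_def freq_def[symmetric]
proof (rule cSUP_upper)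
  show "t \<in> {t. \<forall>i<s. 0 \<le> t i \<and> t i \<le> 1}" using assms by simp
  show "bdd_above ((\<lambda>t. \<bar>freq s x t N - (\<Prod>i<s. t i)\<bar>) ` {t. \<forall>i<s. 0 \<le> t i \<and> t i \<le> 1})"
  proof (rule bdd_aboveI2)
    fix t :: "nat \<Rightarrow> real" assume "t \<in> {t. \<forall>i<s. 0 \<le> t i \<and> t i \<le> 1}"
    then have "0 \<le> (\<Prod>i<s. t i)" "(\<Prod>i<s. t i) \<le> 1" by (auto intro: prod_nonneg prod_le_1)
    then show "\<bar>freq s x t N - (\<Prod>i<s. t i)\<bar> \<le> 2" using freq_le1[of s x t N] freq_ge0[of s x t N] by linarith
  qed
qed

lemma anchored_lim:
  assumes "ud_cube s x" "\<forall>i<s. 0 \<le> t i \<and> t i \<le> 1"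
  shows "(\<lambda>N. freq s x t N) \<longlonglongrightarrow> (\<Prod>i<s. t i)"
proof -
  have "(\<lambda>N. freq s x t N - (\<Prod>i<s. t i)) \<longlonglongrightarrow> 0"
  proof (rule Lim_null_comparison)
    show "\<forall>\<^sub>F N in sequentially. norm (freq s x t N - (\<Prod>i<s. t i)) \<le> star_discrepancy s x N"
      using disc_upper[OF assms(2)] by simp
    show "(\<lambda>N. star_discrepancy s x N) \<longlonglongrightarrow> 0" using assms(1) by (simp add: ud_cube_def)
  qed
  then show ?thesis by (simp add: LIM_zero_iff)
qed

lemma box_lim:
  assumes ud: "ud_cube s x" and ab: "\<forall>i<s. 0 \<le> a i \<and> a i \<le> b i \<and> b i \<le> 1"
  shows "(\<lambda>N. real (card {n. n < N \<and> (\<forall>i<s. 0 \<le> x n i \<and> a i \<le> x n i \<and> x n i < b i)}) / real N)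
           \<longlonglongrightarrow> (\<Prod>i<s. b i - a i)"
proof -
  define g where "g X i = (if i \<in> X then a i else b i)" for X i
  have ind: "of_bool (\<forall>i<s. 0 \<le> x n i \<and> a i \<le> x n i \<and> x n i < b i)
      = (\<Sum>X\<in>Pow {..<s}. (-1) ^ card X * of_bool (\<forall>i<s. 0 \<le> x n i \<and> x n i < g X i) :: real)" for n
  proof -
    have "of_bool (\<forall>i<s. 0 \<le> x n i \<and> a i \<le> x n i \<and> x n i < b i)
        = (\<Prod>i<s. of_bool (0 \<le> x n i \<and> x n i < b i) - of_bool (0 \<le> x n i \<and> x n i < a i) :: real)"
    proof -
      have "(\<Prod>i<s. of_bool (0 \<le> x n i \<and> x n i < b i) - of_bool (0 \<le> x n i \<and> x n i < a i) :: real)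
          = (\<Prod>i<s. of_bool (0 \<le> x n i \<and> a i \<le> x n i \<and> x n i < b i))"
        using ab by (intro prod.cong) auto
      then show ?thesis by (simp add: prod_of_bool_lt)
    qed
    also have "\<dots> = (\<Sum>X\<in>Pow {..<s}. (-1) ^ card X * (\<Prod>i<s. if i \<in> X then of_bool (0 \<le> x n i \<and> x n i < a i) else of_bool (0 \<le> x n i \<and> x n i < b i)))"
      by (rule incl_excl_prod) simp
    also have "\<dots> = (\<Sum>X\<in>Pow {..<s}. (-1) ^ card X * of_bool (\<forall>i<s. 0 \<le> x n i \<and> x n i < g X i))"
    proof (rule sum.cong[OF refl])
      fix X
      have "(\<Prod>i<s. if i \<in> X then of_bool (0 \<le> x n i \<and> x n i < a i) else of_bool (0 \<le> x n i \<and> x n i < b i) :: real)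
          = (\<Prod>i<s. of_bool (0 \<le> x n i \<and> x n i < g X i))" by (intro prod.cong) (auto simp: g_def)
      then show "(-1) ^ card X * (\<Prod>i<s. if i \<in> X then of_bool (0 \<le> x n i \<and> x n i < a i) else of_bool (0 \<le> x n i \<and> x n i < b i)) =
         (-1) ^ card X * (of_bool (\<forall>i<s. 0 \<le> x n i \<and> x n i < g X i) :: real)"
        by (simp add: prod_of_bool_lt)
    qed
    finally show ?thesis .
  qed
  have eq: "real (card {n. n < N \<and> (\<forall>i<s. 0 \<le> x n i \<and> a i \<le> x n i \<and> x n i < b i)}) / real N
      = (\<Sum>X\<in>Pow {..<s}. (-1) ^ card X * freq s x (g X) N)" for N
  proof -
    have "real (card {n. n < N \<and> (\<forall>i<s. 0 \<le> x n i \<and> a i \<le> x n i \<and> x n i < b i)})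
        = (\<Sum>n<N. \<Sum>X\<in>Pow {..<s}. (-1) ^ card X * of_bool (\<forall>i<s. 0 \<le> x n i \<and> x n i < g X i))"
      unfolding card_as_sum using ind by simp
    also have "\<dots> = (\<Sum>X\<in>Pow {..<s}. \<Sum>n<N. (-1) ^ card X * of_bool (\<forall>i<s. 0 \<le> x n i \<and> x n i < g X i))"
      by (rule sum.swap)
    also have "\<dots> = (\<Sum>X\<in>Pow {..<s}. (-1) ^ card X * (\<Sum>n<N. of_bool (\<forall>i<s. 0 \<le> x n i \<and> x n i < g X i)))"
      by (simp only: sum_distrib_left)
    finally have c: "real (card {n. n < N \<and> (\<forall>i<s. 0 \<le> x n i \<and> a i \<le> x n i \<and> x n i < b i)}) =
       (\<Sum>X\<in>Pow {..<s}. (-1) ^ card X * (\<Sum>n<N. of_bool (\<forall>i<s. 0 \<le> x n i \<and> x n i < g X i)))" .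
    have f: "freq s x (g X) N = (\<Sum>n<N. of_bool (\<forall>i<s. 0 \<le> x n i \<and> x n i < g X i)) / real N" for X
      by (simp only: freq_def card_as_sum)
    show ?thesis by (simp only: c f times_divide_eq_right sum_divide_distrib[symmetric])
  qed
  have lim: "(\<lambda>N. \<Sum>X\<in>Pow {..<s}. (-1) ^ card X * freq s x (g X) N)
      \<longlonglongrightarrow> (\<Sum>X\<in>Pow {..<s}. (-1) ^ card X * (\<Prod>i<s. g X i))"
  proof (intro tendsto_sum tendsto_mult_left anchored_lim[OF ud])
    fix X show "\<forall>i<s. 0 \<le> g X i \<and> g X i \<le> 1" using ab by (auto simp: g_def)
  qed
  have "(\<Prod>i<s. b i - a i) = (\<Sum>X\<in>Pow {..<s}. (-1) ^ card X * (\<Prod>i<s. g X i))"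
    unfolding g_def by (rule incl_excl_prod) simp
  then show ?thesis using lim eq by simp
qed

lemma card_split:
  fixes p :: "nat \<Rightarrow> nat \<Rightarrow> nat" and s N :: nat
  assumes fin: "\<And>i. finite (A i)"
  shows "card {n. n < N \<and> (\<forall>i<s. p n i \<in> A i)}
     = (\<Sum>P\<in>PiE {..<s} A. card {n. n < N \<and> (\<forall>i<s. p n i = P i)})"
proof -
  have U: "{n. n < N \<and> (\<forall>i<s. p n i \<in> A i)} = (\<Union>P\<in>PiE {..<s} A. {n. n < N \<and> (\<forall>i<s. p n i = P i)})"
  proof
    show "{n. n < N \<and> (\<forall>i<s. p n i \<in> A i)} \<subseteq> (\<Union>P\<in>PiE {..<s} A. {n. n < N \<and> (\<forall>i<s. p n i = P i)})"
    proof
      fix n assume n: "n \<in> {n. n < N \<and> (\<forall>i<s. p n i \<in> A i)}"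
      then have "restrict (p n) {..<s} \<in> PiE {..<s} A" by auto
      moreover have "n \<in> {n. n < N \<and> (\<forall>i<s. p n i = restrict (p n) {..<s} i)}" using n by auto
      ultimately show "n \<in> (\<Union>P\<in>PiE {..<s} A. {n. n < N \<and> (\<forall>i<s. p n i = P i)})" by blast
    qed
  qed (auto simp: PiE_iff)
  show ?thesis unfolding U
  proof (rule card_UN_disjoint)
    show "finite (PiE {..<s} A)" using fin by (intro finite_PiE) auto
    show "\<forall>P\<in>PiE {..<s} A. finite {n. n < N \<and> (\<forall>i<s. p n i = P i)}" by auto
    show "\<forall>P\<in>PiE {..<s} A. \<forall>P'\<in>PiE {..<s} A. P \<noteq> P' \<longrightarrow>
        {n. n < N \<and> (\<forall>i<s. p n i = P i)} \<inter> {n. n < N \<and> (\<forall>i<s. p n i = P' i)} = {}"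
    proof (intro ballI impI)
      fix P P' assume P: "P \<in> PiE {..<s} A" and P': "P' \<in> PiE {..<s} A" and ne: "P \<noteq> P'"
      then obtain i where i: "i < s" "P i \<noteq> P' i"
        using PiE_ext[OF P P'] by auto
      then show "{n. n < N \<and> (\<forall>i<s. p n i = P i)} \<inter> {n. n < N \<and> (\<forall>i<s. p n i = P' i)} = {}" by auto
    qed
  qed
qed

lemma card_bound:
  fixes h :: nat and t :: real and B :: "nat set"
  assumes h: "h > 0" and t: "0 \<le> t" "t \<le> 1"
    and sub1: "{..<nat \<lfloor>t * real h\<rfloor> - 1} \<subseteq> B" and sub2: "B \<subseteq> {..<nat \<lceil>t * real h\<rceil>}"
    and sub3: "B \<subseteq> {..<h}"
  shows "\<bar>real (card B) / real h - t\<bar> \<le> 2 / real h" "0 \<le> real (card B) / real h" "real (card B) / real h \<le> 1"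
proof -
  have hp: "real h > 0" using h by simp
  have fl: "real_of_int \<lfloor>t * real h\<rfloor> \<ge> t * real h - 1" by linarith
  have fl0: "\<lfloor>t * real h\<rfloor> \<ge> 0" using t hp by simp
  have c1: "card B \<ge> nat \<lfloor>t * real h\<rfloor> - 1"
    using card_mono[OF _ sub1] sub3 finite_subset by (metis card_lessThan finite_lessThan)
  have "real (card B) \<ge> real (nat \<lfloor>t * real h\<rfloor>) - 1" using c1 by linarith
  then have lo: "real (card B) \<ge> t * real h - 2" using fl fl0 by (simp del: of_int_floor_le) linarith
  have c2: "card B \<le> nat \<lceil>t * real h\<rceil>" using card_mono[OF _ sub2] by simp
  have th0: "0 \<le> t * real h" using t hp by simp
  then have "real (nat \<lceil>t * real h\<rceil>) = real_of_int \<lceil>t * real h\<rceil>" by simp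
  then have "real (nat \<lceil>t * real h\<rceil>) \<le> t * real h + 1" using of_int_ceiling_le_add_one[of "t * real h"] by linarith
  then have up: "real (card B) \<le> t * real h + 1" using c2 by linarith
  have c3: "card B \<le> h" using card_mono[OF _ sub3] by simp
  have e1: "real (card B) / real h - t = (real (card B) - t * real h) / real h" using hp by (simp add: field_simps)
  have e2: "t - real (card B) / real h = (t * real h - real (card B)) / real h" using hp by (simp add: field_simps)
  have "(real (card B) - t * real h) / real h \<le> 1 / real h" using up hp by (intro divide_right_mono) auto
  moreover have "(t * real h - real (card B)) / real h \<le> 2 / real h" using lo hp by (intro divide_right_mono) auto
  ultimately have "real (card B) / real h - t \<le> 1 / real h" "t - real (card B) / real h \<le> 2 / real h"
    using e1 e2 by auto
  moreover have "1 / real h \<le> 2 / real h" using hp by (simp add: divide_right_mono)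
  ultimately show "\<bar>real (card B) / real h - t\<bar> \<le> 2 / real h" by linarith
  show "0 \<le> real (card B) / real h" by simp
  show "real (card B) / real h \<le> 1" using c3 hp by simp
qed

lemma abs_combine:
  fixes a b c d F T e :: real
  assumes "\<bar>a - b\<bar> \<le> e / 4" "\<bar>c - d\<bar> \<le> e / 4" "\<bar>b - T\<bar> \<le> e / 2" "\<bar>d - T\<bar> \<le> e / 2" "a \<le> F" "F \<le> c"
  shows "\<bar>F - T\<bar> \<le> 3 * e / 4"
proof (rule abs_leI)
  show "F - T \<le> 3 * e / 4" using abs_le_D1[OF assms(2)] abs_le_D1[OF assms(4)] assms(6) by linarith
  show "- (F - T) \<le> 3 * e / 4" using abs_le_D2[OF assms(1)] abs_le_D2[OF assms(3)] assms(5) by linarith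
qed

lemma lemmaB:
  fixes x :: "nat \<Rightarrow> nat \<Rightarrow> real" and pat :: "nat \<Rightarrow> nat \<Rightarrow> nat \<Rightarrow> nat" and q s :: nat
  assumes q2: "q \<ge> 2"
    and patlt: "\<And>m n i. i < s \<Longrightarrow> pat m n i < q ^ m"
    and lo: "\<And>m n i. i < s \<Longrightarrow> real (pat m n i) / real q ^ m \<le> x n i"
    and hi: "\<And>m n i. i < s \<Longrightarrow> x n i \<le> (real (pat m n i) + 1) / real q ^ m"
    and fr: "\<And>m P. P \<in> PiE {..<s} (\<lambda>_. {..<q ^ m}) \<Longrightarrow>
       (\<lambda>N. real (card {n. n < N \<and> (\<forall>i<s. pat m n i = P i)}) / real N) \<longlonglongrightarrow> 1 / real (q ^ m) ^ s"
  shows "ud_cube s x"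
  unfolding ud_cube_def
proof (rule LIMSEQ_I)
  fix \<epsilon> :: real assume ep: "\<epsilon> > 0"
  have q1: "1 < real q" using q2 by simp
  obtain m where hm: "4 * real s / \<epsilon> < real q ^ m" using real_arch_pow[OF q1] by blast
  define h where "h = q ^ m"
  have hpos: "h > 0" using q2 by (simp add: h_def)
  have hr: "real h = real q ^ m" by (simp add: h_def)
  have hp: "real h > 0" using hpos by simp
  have sh: "2 * real s / real h \<le> \<epsilon> / 2"
  proof -
    have "4 * real s < \<epsilon> * real h" using hm ep hr by (simp add: field_simps)
    then show ?thesis using hp ep by (simp add: field_simps)
  qed
  define PS where "PS = PiE {..<s} (\<lambda>_. {..<h})"
  have finPS: "finite PS" unfolding PS_def by (intro finite_PiE) auto
  have cardPS: "card PS = h ^ s" unfolding PS_def by (simp add: card_PiE)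
  define \<delta> where "\<delta> = \<epsilon> / 4 / real h ^ s"
  have dpos: "\<delta> > 0" using ep hp by (simp add: \<delta>_def)
  define cnt where "cnt P N = real (card {n. n < N \<and> (\<forall>i<s. pat m n i = P i)}) / real N" for P N
  have "\<forall>\<^sub>F N in sequentially. \<forall>P\<in>PS. dist (cnt P N) (1 / real h ^ s) < \<delta>"
  proof (rule eventually_ball_finite[OF finPS], rule ballI)
    fix P assume "P \<in> PS"
    then have "(\<lambda>N. cnt P N) \<longlonglongrightarrow> 1 / real h ^ s"
      using fr[of P m] by (simp add: cnt_def PS_def h_def)
    then show "\<forall>\<^sub>F N in sequentially. dist (cnt P N) (1 / real h ^ s) < \<delta>"
      using dpos by (rule tendstoD)
  qed
  then obtain N0 where N0: "\<And>N. N \<ge> N0 \<Longrightarrow> \<forall>P\<in>PS. \<bar>cnt P N - 1 / real h ^ s\<bar> < \<delta>"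
    unfolding eventually_sequentially dist_real_def by blast
  have setfreq: "\<bar>real (card {n. n < N \<and> (\<forall>i<s. pat m n i \<in> A i)}) / real N
                   - (\<Prod>i<s. real (card (A i)) / real h)\<bar> \<le> \<epsilon> / 4"
    if N: "N \<ge> N0" and A: "\<And>i. A i \<subseteq> {..<h}" for N A
  proof -
    have finA: "\<And>i. finite (A i)" using A finite_subset by blast
    have sub: "PiE {..<s} A \<subseteq> PS" unfolding PS_def using A by (auto simp: PiE_iff)
    have finP: "finite (PiE {..<s} A)" using finite_subset[OF sub finPS] .
    have "real (card {n. n < N \<and> (\<forall>i<s. pat m n i \<in> A i)}) / real N
        = (\<Sum>P\<in>PiE {..<s} A. cnt P N)"
      unfolding card_split[of A, OF finA] cnt_def by (simp add: sum_divide_distrib)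
    moreover have "(\<Prod>i<s. real (card (A i)) / real h) = (\<Sum>P\<in>PiE {..<s} A. 1 / real h ^ s)"
    proof -
      have "(\<Prod>i<s. real (card (A i)) / real h) = (\<Prod>i<s. real (card (A i))) / (\<Prod>i<s. real h)"
        by (rule prod_dividef)
      also have "\<dots> = real (card (PiE {..<s} A)) / real h ^ s"
        by (simp add: card_PiE)
      finally show ?thesis by simp
    qed
    ultimately have "\<bar>real (card {n. n < N \<and> (\<forall>i<s. pat m n i \<in> A i)}) / real N
                   - (\<Prod>i<s. real (card (A i)) / real h)\<bar> = \<bar>\<Sum>P\<in>PiE {..<s} A. cnt P N - 1 / real h ^ s\<bar>"
      by (simp add: sum_subtractf)
    also have "\<dots> \<le> (\<Sum>P\<in>PiE {..<s} A. \<bar>cnt P N - 1 / real h ^ s\<bar>)" by (rule sum_abs)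
    also have "\<dots> \<le> (\<Sum>P\<in>PiE {..<s} A. \<delta>)"
      using N0[OF N] sub by (intro sum_mono) (auto intro: less_imp_le)
    also have "\<dots> = real (card (PiE {..<s} A)) * \<delta>" by simp
    also have "\<dots> \<le> real (card PS) * \<delta>"
      using card_mono[OF finPS sub] dpos by (intro mult_right_mono) auto
    also have "\<dots> = \<epsilon> / 4" using cardPS hp by (simp add: \<delta>_def)
    finally show ?thesis .
  qed
  show "\<exists>N0. \<forall>N\<ge>N0. norm (star_discrepancy s x N - 0) < \<epsilon>"
  proof (intro exI allI impI)
    fix N assume N: "N \<ge> N0"
    have bound: "\<bar>freq s x t N - (\<Prod>i<s. t i)\<bar> \<le> 3 * \<epsilon> / 4"
      if t: "\<forall>i<s. 0 \<le> t i \<and> t i \<le> 1" for t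
    proof -
      define Lo where "Lo i = {a. a < h \<and> real a + 1 < t i * real h}" for i
      define Up where "Up i = {a. a < h \<and> real a < t i * real h}" for i
      have prodb: "\<bar>(\<Prod>i<s. real (card (B i)) / real h) - (\<Prod>i<s. t i)\<bar> \<le> \<epsilon> / 2"
        if B1: "\<And>i. i < s \<Longrightarrow> {..<nat \<lfloor>t i * real h\<rfloor> - 1} \<subseteq> B i"
          and B2: "\<And>i. i < s \<Longrightarrow> B i \<subseteq> {..<nat \<lceil>t i * real h\<rceil>}"
          and B3: "\<And>i. i < s \<Longrightarrow> B i \<subseteq> {..<h}" for B
      proof -
        have "\<bar>(\<Prod>i<s. real (card (B i)) / real h) - (\<Prod>i<s. t i)\<bar>
            \<le> (\<Sum>i<s. \<bar>real (card (B i)) / real h - t i\<bar>)"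
          using card_bound[OF hpos _ _ B1 B2 B3] t by (intro prod_diff_bound) auto
        also have "\<dots> \<le> (\<Sum>i<s. 2 / real h)"
          using card_bound[OF hpos _ _ B1 B2 B3] t by (intro sum_mono) auto
        also have "\<dots> = 2 * real s / real h" by simp
        finally show ?thesis using sh by linarith
      qed
      have fl: "real_of_int \<lfloor>t i * real h\<rfloor> \<le> t i * real h" for i by simp
      have flh: "\<lfloor>t i * real h\<rfloor> \<le> int h" if "i < s" for i
      proof -
        have "t i * real h \<le> real h" using t that hp by (simp add: mult_left_le_one_le)
        then show ?thesis by linarith
      qed
      have cl: "t i * real h \<le> real_of_int \<lceil>t i * real h\<rceil>" for i by simp
      have L1: "{..<nat \<lfloor>t i * real h\<rfloor> - 1} \<subseteq> Lo i" if "i < s" for i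
      proof
        fix a assume "a \<in> {..<nat \<lfloor>t i * real h\<rfloor> - 1}"
        then have a: "a + 1 < nat \<lfloor>t i * real h\<rfloor>" by simp
        then have "real a + 1 < real_of_int \<lfloor>t i * real h\<rfloor>" by linarith
        then show "a \<in> Lo i" using a flh[OF that] fl[of i] by (simp add: Lo_def) linarith
      qed
      have U1: "{..<nat \<lfloor>t i * real h\<rfloor> - 1} \<subseteq> Up i" if "i < s" for i
        using L1[OF that] by (auto simp: Lo_def Up_def)
      have L2: "Lo i \<subseteq> {..<nat \<lceil>t i * real h\<rceil>}" for i
        using cl[of i] by (auto simp: Lo_def) linarith
      have U2: "Up i \<subseteq> {..<nat \<lceil>t i * real h\<rceil>}" for i
        using cl[of i] by (auto simp: Up_def) linarith
      have L3: "Lo i \<subseteq> {..<h}" "Up i \<subseteq> {..<h}" for i by (auto simp: Lo_def Up_def)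
      have L3': "i < s \<Longrightarrow> Lo i \<subseteq> {..<h}" "i < s \<Longrightarrow> Up i \<subseteq> {..<h}" for i using L3 by auto
      have inc1: "{n. n < N \<and> (\<forall>i<s. pat m n i \<in> Lo i)} \<subseteq> {n. n < N \<and> (\<forall>i<s. 0 \<le> x n i \<and> x n i < t i)}"
      proof safe
        fix n i assume "\<forall>i<s. pat m n i \<in> Lo i" "i < s"
        then have "real (pat m n i) + 1 < t i * real h" by (simp add: Lo_def)
        then have "(real (pat m n i) + 1) / real h < t i" using hp by (simp add: field_simps)
        then show "x n i < t i" using hi[of i n m] \<open>i < s\<close> hr by simp
        show "0 \<le> x n i" using lo[of i m n] \<open>i < s\<close> by (intro order_trans[OF _ lo[of i m n]]) auto
      qed
      have inc2: "{n. n < N \<and> (\<forall>i<s. 0 \<le> x n i \<and> x n i < t i)} \<subseteq> {n. n < N \<and> (\<forall>i<s. pat m n i \<in> Up i)}"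
      proof safe
        fix n i assume a: "\<forall>i<s. 0 \<le> x n i \<and> x n i < t i" "i < s"
        then have "real (pat m n i) / real h < t i" using lo[of i m n] hr by force
        then have "real (pat m n i) < t i * real h" using hp by (simp add: field_simps)
        then show "pat m n i \<in> Up i" using patlt[of i m n] a by (simp add: Up_def h_def)
      qed
      have c1: "real (card {n. n < N \<and> (\<forall>i<s. pat m n i \<in> Lo i)}) / real N \<le> freq s x t N"
        unfolding freq_def using card_mono[OF _ inc1] by (intro divide_right_mono) auto
      have c2: "freq s x t N \<le> real (card {n. n < N \<and> (\<forall>i<s. pat m n i \<in> Up i)}) / real N"
        unfolding freq_def using card_mono[OF _ inc2] by (intro divide_right_mono) auto
      have sL: "\<bar>real (card {n. n < N \<and> (\<forall>i<s. pat m n i \<in> Lo i)}) / real N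
                   - (\<Prod>i<s. real (card (Lo i)) / real h)\<bar> \<le> \<epsilon> / 4"
        using setfreq[OF N, of Lo] L3 by blast
      have sU: "\<bar>real (card {n. n < N \<and> (\<forall>i<s. pat m n i \<in> Up i)}) / real N
                   - (\<Prod>i<s. real (card (Up i)) / real h)\<bar> \<le> \<epsilon> / 4"
        using setfreq[OF N, of Up] L3 by blast
      have pL: "\<bar>(\<Prod>i<s. real (card (Lo i)) / real h) - (\<Prod>i<s. t i)\<bar> \<le> \<epsilon> / 2"
        by (rule prodb[of Lo, OF L1 L2 L3'(1)])
      have pU: "\<bar>(\<Prod>i<s. real (card (Up i)) / real h) - (\<Prod>i<s. t i)\<bar> \<le> \<epsilon> / 2"
        by (rule prodb[of Up, OF U1 U2 L3'(2)])
      show ?thesis by (rule abs_combine[OF sL sU pL pU c1 c2])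
    qed
    have D1: "star_discrepancy s x N \<le> 3 * \<epsilon> / 4"
    proof -
      have ne: "{t. \<forall>i<s. 0 \<le> t i \<and> t i \<le> (1::real)} \<noteq> {}"
      proof -
        have "(\<lambda>_. 0 :: real) \<in> {t. \<forall>i<s. 0 \<le> t i \<and> t i \<le> 1}" by simp
        then show ?thesis by (rule ex_in_conv[THEN iffD1, OF exI])
      qed
      have b: "\<bar>freq s x t N - (\<Prod>i<s. t i)\<bar> \<le> 3 * \<epsilon> / 4"
        if "t \<in> {t. \<forall>i<s. 0 \<le> t i \<and> t i \<le> 1}" for t
        using that bound by blast
      have "(SUP t\<in>{t. \<forall>i<s. 0 \<le> t i \<and> t i \<le> 1}. \<bar>freq s x t N - (\<Prod>i<s. t i)\<bar>) \<le> 3 * \<epsilon> / 4"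
        by (rule cSUP_least[OF ne b])
      then show ?thesis unfolding star_discrepancy_def freq_def .
    qed
    have D0: "0 \<le> star_discrepancy s x N"
    proof -
      have "\<bar>freq s x (\<lambda>_. 0) N - (\<Prod>i<s. (\<lambda>_. 0::real) i)\<bar> \<le> star_discrepancy s x N"
        by (rule disc_upper) simp
      then show ?thesis by (rule order_trans[OF abs_ge_zero])
    qed
    show "norm (star_discrepancy s x N - 0) < \<epsilon>" using D0 D1 ep by simp

  qed
qed

definition rowv :: "(nat \<Rightarrow> nat \<Rightarrow> nat \<Rightarrow> 'f::{field,finite}) \<Rightarrow> (nat \<Rightarrow> nat \<Rightarrow> 'f) \<Rightarrow> (nat \<Rightarrow> nat) \<Rightarrow> nat \<Rightarrow> nat \<Rightarrow> 'f" where
  "rowv C psi a i j = (\<Sum>r\<in>{r. C i j r \<noteq> 0}. C i j r * psi r (a r))"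

definition dig :: "(nat \<Rightarrow> nat \<Rightarrow> nat \<Rightarrow> 'f::{field,finite}) \<Rightarrow> (nat \<Rightarrow> nat \<Rightarrow> 'f) \<Rightarrow> (nat \<Rightarrow> nat \<Rightarrow> 'f \<Rightarrow> nat)
   \<Rightarrow> (nat \<Rightarrow> nat) \<Rightarrow> nat \<Rightarrow> nat \<Rightarrow> nat" where
  "dig C psi lam a i j = lam i (Suc j) (rowv C psi a i (Suc j))"

lemma gen_coord_eq: "gen_coord C psi lam a i = (\<Sum>j. real (dig C psi lam a i j) / real CARD('f) ^ Suc j)"
  for C :: "nat \<Rightarrow> nat \<Rightarrow> nat \<Rightarrow> 'f::{field,finite}"
  by (simp add: gen_coord_def dig_def rowv_def)

lemma card_field_ge2: "CARD('f::{field,finite}) \<ge> 2"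
proof -
  have "card {0::'f, 1} = 2" by simp
  moreover have "card {0::'f, 1} \<le> CARD('f)" by (rule card_mono) auto
  ultimately show ?thesis by simp
qed

lemma dig_lt:
  fixes C :: "nat \<Rightarrow> nat \<Rightarrow> nat \<Rightarrow> 'f::{field,finite}"
  assumes "\<forall>i<s. \<forall>j\<ge>1. bij_betw (lam i j) (UNIV :: 'f set) {..<CARD('f)}" "i < s"
  shows "dig C psi lam a i j < CARD('f)"
proof -
  have b: "bij_betw (lam i (Suc j)) (UNIV :: 'f set) {..<CARD('f)}" using assms by auto
  have "lam i (Suc j) y \<in> {..<CARD('f)}" for y using bij_betw_apply[OF b] by simp
  then show ?thesis by (simp add: dig_def)
qed

lemma point_bounds:
  fixes C :: "nat \<Rightarrow> nat \<Rightarrow> nat \<Rightarrow> 'f::{field,finite}"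
  assumes "\<forall>i<s. \<forall>j\<ge>1. bij_betw (lam i j) (UNIV :: 'f set) {..<CARD('f)}" "i < s"
  shows "real (enc CARD('f) m (dig C psi lam a i)) / real CARD('f) ^ m \<le> gen_coord C psi lam a i"
    "gen_coord C psi lam a i \<le> (real (enc CARD('f) m (dig C psi lam a i)) + 1) / real CARD('f) ^ m"
    "enc CARD('f) m (dig C psi lam a i) < CARD('f) ^ m"
  using digit_expansion[OF card_field_ge2 dig_lt[OF assms], where m=m]
    enc_less[OF dig_lt[OF assms]] by (simp_all add: gen_coord_eq)

lemma support_bound:
  fixes C :: "nat \<Rightarrow> nat \<Rightarrow> nat \<Rightarrow> 'f::{field,finite}"
  assumes "\<forall>i<s. finite_row (C i)"
  shows "\<exists>L\<ge>1. \<forall>i<s. \<forall>j<m. {r. C i (Suc j) r \<noteq> 0} \<subseteq> {..<L}"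
proof -
  have "finite (\<Union>i<s. \<Union>j<m. {r. C i (Suc j) r \<noteq> 0})"
    using assms by (auto simp: finite_row_def)
  then obtain k where k: "(\<Union>i<s. \<Union>j<m. {r. C i (Suc j) r \<noteq> 0}) \<subseteq> {..<k}"
    using finite_nat_bounded by blast
  show ?thesis
  proof (intro exI[of _ "Suc k"] conjI allI impI subsetI)
    fix i j r assume "i < s" "j < m" "r \<in> {r. C i (Suc j) r \<noteq> 0}"
    then have "r \<in> (\<Union>i<s. \<Union>j<m. {r. C i (Suc j) r \<noteq> 0})" by blast
    then have "r < k" using k by blast
    then show "r \<in> {..<Suc k}" by simp
  qed simp
qed

lemma rowv_L:
  fixes C :: "nat \<Rightarrow> nat \<Rightarrow> nat \<Rightarrow> 'f::{field,finite}"
  assumes "{r. C i j r \<noteq> 0} \<subseteq> {..<L}"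
  shows "rowv C psi a i j = (\<Sum>r<L. C i j r * psi r (a r))"
  unfolding rowv_def by (rule sum.mono_neutral_left) (use assms in auto)

lemma surjA:
  fixes C :: "nat \<Rightarrow> nat \<Rightarrow> nat \<Rightarrow> 'f::{field,finite}"
  assumes lam1: "\<forall>i<s. \<forall>j\<ge>1. bij_betw (lam1 i j) (UNIV :: 'f set) {..<CARD('f)}"
    and ud: "ud_cube s (\<lambda>n i. gen_coord C psi1 lam1 (A n) i)"
    and L: "\<forall>i<s. \<forall>j<m. {r. C i (Suc j) r \<noteq> 0} \<subseteq> {..<L}"
  shows "\<forall>w. \<exists>v. \<forall>i<s. \<forall>j<m. (\<Sum>r<L. C i (Suc j) r * v r) = w i j"
proof (rule ccontr)
  assume "\<not> ?thesis"
  then obtain w where nv: "\<And>v. \<exists>i<s. \<exists>j<m. (\<Sum>r<L. C i (Suc j) r * v r) \<noteq> w i j" by blast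
  define q where "q = CARD('f)"
  have q2: "q \<ge> 2" unfolding q_def by (rule card_field_ge2)
  define h where "h = q ^ m"
  have hp: "real h > 0" using q2 by (simp add: h_def)
  have hr: "real q ^ m = real h" by (simp add: h_def)
  have hr': "real CARD('f) ^ m = real h" using hr by (simp add: q_def)
  define D where "D i j = lam1 i (Suc j) (w i j)" for i j
  have Dlt: "D i j < q" if "i < s" for i j
  proof -
    have b: "bij_betw (lam1 i (Suc j)) (UNIV :: 'f set) {..<CARD('f)}" using lam1 that by auto
    have "lam1 i (Suc j) y \<in> {..<CARD('f)}" for y using bij_betw_apply[OF b] by simp
    then show ?thesis by (simp add: D_def q_def)
  qed
  define P where "P i = enc q m (D i)" for i
  have Plt: "P i < h" if "i < s" for i unfolding P_def h_def by (rule enc_less) (use Dlt that in auto)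
  define \<alpha> where "\<alpha> i = (real (P i) + 1/3) / real h" for i
  define \<beta> where "\<beta> i = (real (P i) + 2/3) / real h" for i
  define x where "x n i = gen_coord C psi1 lam1 (A n) i" for n i
  have ab: "\<forall>i<s. 0 \<le> \<alpha> i \<and> \<alpha> i \<le> \<beta> i \<and> \<beta> i \<le> 1"
  proof (intro allI impI conjI)
    fix i assume i: "i < s"
    show "0 \<le> \<alpha> i" using hp by (simp add: \<alpha>_def)
    show "\<alpha> i \<le> \<beta> i" using hp by (simp add: \<alpha>_def \<beta>_def divide_right_mono)
    have "real (P i) + 1 \<le> real h" using Plt[OF i] by linarith
    then show "\<beta> i \<le> 1" using hp by (simp add: \<beta>_def)
  qed
  have lim: "(\<lambda>N. real (card {n. n < N \<and> (\<forall>i<s. 0 \<le> x n i \<and> \<alpha> i \<le> x n i \<and> x n i < \<beta> i)}) / real N)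
      \<longlonglongrightarrow> (\<Prod>i<s. \<beta> i - \<alpha> i)"
    using box_lim[OF _ ab, of x] ud by (simp add: x_def[abs_def])
  have empty: "{n. n < N \<and> (\<forall>i<s. 0 \<le> x n i \<and> \<alpha> i \<le> x n i \<and> x n i < \<beta> i)} = {}" for N
  proof -
    have "\<not> (\<forall>i<s. \<alpha> i \<le> x n i \<and> x n i < \<beta> i)" for n
    proof
      assume inb: "\<forall>i<s. \<alpha> i \<le> x n i \<and> x n i < \<beta> i"
      obtain i j where ij: "i < s" "j < m" "(\<Sum>r<L. C i (Suc j) r * psi1 r (A n r)) \<noteq> w i j"
        using nv[of "\<lambda>r. psi1 r (A n r)"] by blast
      have "rowv C psi1 (A n) i (Suc j) = (\<Sum>r<L. C i (Suc j) r * psi1 r (A n r))"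
        by (rule rowv_L) (use L ij in auto)
      then have rv: "rowv C psi1 (A n) i (Suc j) \<noteq> w i j" using ij by simp
      have "bij_betw (lam1 i (Suc j)) (UNIV :: 'f set) {..<CARD('f)}" using lam1 ij(1) by auto
      then have inj: "inj (lam1 i (Suc j))" by (rule bij_betw_imp_inj_on)
      have dne: "dig C psi1 lam1 (A n) i j \<noteq> D i j"
        unfolding dig_def D_def by (simp add: inj_eq[OF inj] rv)
      have xi: "\<alpha> i \<le> x n i" "x n i < \<beta> i" using inb ij(1) by auto
      have ne: "enc q m (dig C psi1 lam1 (A n) i) \<noteq> P i"
      proof
        assume eq: "enc q m (dig C psi1 lam1 (A n) i) = P i"
        have "dig C psi1 lam1 (A n) i j = D i j"
          by (rule enc_inj[where q=q and m=m])
            (use q2 Dlt[OF ij(1)] dig_lt[OF lam1 ij(1)] eq ij(2) in \<open>auto simp: P_def q_def\<close>)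
        with dne show False by simp
      qed
      define e where "e = enc q m (dig C psi1 lam1 (A n) i)"
      have b1: "real e / real h \<le> x n i" "x n i \<le> (real e + 1) / real h"
        using point_bounds[OF lam1 ij(1), where m=m and C=C and psi=psi1 and a="A n"] by (simp_all add: e_def x_def q_def hr')
      show False
      proof (cases "e < P i")
        case True
        then have "real e + 1 \<le> real (P i)" by linarith
        then have "(real e + 1) / real h < \<alpha> i" using hp by (simp add: \<alpha>_def divide_strict_right_mono)
        then show False using xi b1 by linarith
      next
        case False
        then have "real (P i) + 1 \<le> real e" using ne e_def by linarith
        then have "\<beta> i < real e / real h" using hp by (simp add: \<beta>_def divide_strict_right_mono)
        then show False using xi b1 by linarith
      qed
    qed
    then show ?thesis by auto
  qed
  have "(\<lambda>N. real (card {n. n < N \<and> (\<forall>i<s. 0 \<le> x n i \<and> \<alpha> i \<le> x n i \<and> x n i < \<beta> i)}) / real N)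
      \<longlonglongrightarrow> 0" unfolding empty by simp
  then have "(\<Prod>i<s. \<beta> i - \<alpha> i) = 0" by (rule LIMSEQ_unique[OF lim])
  moreover have "(\<Prod>i<s. \<beta> i - \<alpha> i) > 0"
    using hp by (intro prod_pos) (simp add: \<alpha>_def \<beta>_def divide_strict_right_mono)
  ultimately show False by linarith
qed

lemma card_split1:
  fixes b :: "nat \<Rightarrow> nat" and N :: nat
  assumes "finite G"
  shows "card {n. n < N \<and> b n \<in> G} = (\<Sum>a\<in>G. card {n. n < N \<and> b n = a})"
proof -
  have "{n. n < N \<and> b n \<in> G} = (\<Union>a\<in>G. {n. n < N \<and> b n = a})" by auto
  moreover have "card (\<Union>a\<in>G. {n. n < N \<and> b n = a}) = (\<Sum>a\<in>G. card {n. n < N \<and> b n = a})"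
    by (rule card_UN_disjoint) (use assms in auto)
  ultimately show ?thesis by simp
qed

lemma freqB:
  fixes C :: "nat \<Rightarrow> nat \<Rightarrow> nat \<Rightarrow> 'f::{field,finite}" and sn :: "nat \<Rightarrow> nat \<Rightarrow> nat"
  assumes psi: "\<forall>r. bij_betw (psi r) {..<CARD('f)} (UNIV :: 'f set)"
    and lam: "\<forall>i<s. \<forall>j\<ge>1. bij_betw (lam i j) (UNIV :: 'f set) {..<CARD('f)}"
    and dg: "\<forall>n. qadic_digits CARD('f) (sn n)"
    and ud: "ud_qadic CARD('f) sn"
    and L1: "L \<ge> 1"
    and L: "\<forall>i<s. \<forall>j<m. {r. C i (Suc j) r \<noteq> 0} \<subseteq> {..<L}"
    and sur: "\<forall>w. \<exists>v. \<forall>i<s. \<forall>j<m. (\<Sum>r<L. C i (Suc j) r * v r) = w i j"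
    and P: "P \<in> PiE {..<s} (\<lambda>_. {..<CARD('f) ^ m})"
  shows "(\<lambda>N. real (card {n. n < N \<and> (\<forall>i<s. enc CARD('f) m (dig C psi lam (sn n) i) = P i)}) / real N)
           \<longlonglongrightarrow> 1 / real (CARD('f) ^ m) ^ s"
proof -
  define q where "q = CARD('f)"
  have q2: "q \<ge> 2" unfolding q_def by (rule card_field_ge2)
  have q0: "q > 0" using q2 by simp
  define V where "V = PiE {..<L} (\<lambda>_. UNIV :: 'f set)"
  define \<Phi> where "\<Phi> v i j = (\<Sum>r<L. C i (Suc j) r * v r)" for v i j
  define code where "code v i = enc q m (\<lambda>j. lam i (Suc j) (\<Phi> v i j))" for v i
  define good where "good Q v \<longleftrightarrow> (\<forall>i<s. code v i = Q i)" for Q v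
  define Fib where "Fib Q = {v\<in>V. good Q v}" for Q
  define PS where "PS = PiE {..<s} (\<lambda>_. {..<q ^ m})"
  define vec where "vec a = restrict (\<lambda>r. psi r (a r)) {..<L}" for a
  have lamb: "bij_betw (lam i (Suc j)) (UNIV :: 'f set) {..<q}" if "i < s" for i j
    using lam that by (auto simp: q_def)
  have lamlt: "lam i (Suc j) y < q" if "i < s" for i j y
    using bij_betw_apply[OF lamb[OF that]] by simp
  have laminj: "inj (lam i (Suc j))" if "i < s" for i j
    by (rule bij_betw_imp_inj_on[OF lamb[OF that]])
  have codelt: "code v i < q ^ m" if "i < s" for v i
    unfolding code_def by (rule enc_less) (rule lamlt[OF that])
  have finV: "finite V" unfolding V_def by (intro finite_PiE) auto
  have K1: "enc q m (dig C psi lam a i) = code (vec a) i" if "i < s" for a i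
    unfolding code_def
  proof (rule enc_cong)
    fix j assume j: "j < m"
    have "rowv C psi a i (Suc j) = (\<Sum>r<L. C i (Suc j) r * psi r (a r))"
      by (rule rowv_L) (use L that j in auto)
    also have "\<dots> = \<Phi> (vec a) i j" unfolding \<Phi>_def vec_def by (rule sum.cong) auto
    finally show "dig C psi lam a i j = lam i (Suc j) (\<Phi> (vec a) i j)" by (simp add: dig_def)
  qed
  have K2: "vec (sn n) = vec (nat_digits q (tau q L (sn n)))" for n
  proof -
    have "sn n r < q" for r using dg by (simp add: qadic_digits_def q_def)
    then have "nat_digits q (tau q L (sn n)) r = sn n r" if "r < L" for r
      using digits_tau that by blast
    then show ?thesis unfolding vec_def by (intro ext) simp
  qed
  have samePhi: "\<Phi> v i j = \<Phi> u i j" if "good Q v" "good Q u" "i < s" "j < m" for Q v u i j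
  proof -
    have eq: "code v i = code u i" using that by (simp add: good_def)
    have "lam i (Suc j) (\<Phi> v i j) = lam i (Suc j) (\<Phi> u i j)"
      using enc_inj[OF q0, of m "\<lambda>j. lam i (Suc j) (\<Phi> v i j)" "\<lambda>j. lam i (Suc j) (\<Phi> u i j)" j]
        lamlt[OF that(3)] eq that(4) by (simp add: code_def)
    then show ?thesis using laminj[OF that(3)] by (simp add: inj_eq)
  qed
  have nonempty: "\<exists>v. v \<in> Fib Q" if Q: "Q \<in> PS" for Q
  proof -
    have "\<forall>i. \<exists>d. i < s \<longrightarrow> (\<forall>j<m. d j < q) \<and> enc q m d = Q i"
    proof
      fix i show "\<exists>d. i < s \<longrightarrow> (\<forall>j<m. d j < q) \<and> enc q m d = Q i"
      proof (cases "i < s")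
        case True
        then have "Q i < q ^ m" using Q by (auto simp: PS_def)
        then show ?thesis using enc_surj[OF q0] by blast
      qed simp
    qed
    then obtain dQ where dQ: "\<And>i. i < s \<Longrightarrow> (\<forall>j<m. dQ i j < q) \<and> enc q m (dQ i) = Q i"
      by metis
    define w where "w i j = inv_into UNIV (lam i (Suc j)) (dQ i j)" for i j
    have lw: "lam i (Suc j) (w i j) = dQ i j" if "i < s" "j < m" for i j
    proof -
      have "dQ i j \<in> range (lam i (Suc j))"
        using bij_betw_imp_surj_on[OF lamb[OF that(1)]] dQ[OF that(1)] that(2) by auto
      then show ?thesis unfolding w_def by (rule f_inv_into_f)
    qed
    obtain v where v: "\<And>i j. i < s \<Longrightarrow> j < m \<Longrightarrow> (\<Sum>r<L. C i (Suc j) r * v r) = w i j"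
      using sur by blast
    define v' where "v' = restrict v {..<L}"
    have "v' \<in> V" unfolding v'_def V_def by simp
    moreover have vv: "\<Phi> v' i j = \<Phi> v i j" for i j unfolding \<Phi>_def v'_def by (rule sum.cong) auto
    moreover have "good Q v'"
      unfolding good_def
    proof (intro allI impI)
      fix i assume i: "i < s"
      have "code v' i = enc q m (dQ i)" unfolding code_def
      proof (rule enc_cong)
        fix j assume j: "j < m"
        have "\<Phi> v i j = w i j" using v[OF i j] by (simp add: \<Phi>_def)
        then show "lam i (Suc j) (\<Phi> v' i j) = dQ i j" using vv[of i j] lw[OF i j] by simp
      qed
      then show "code v' i = Q i" using dQ[OF i] by simp
    qed
    ultimately show ?thesis unfolding Fib_def by blast
  qed
  have fible: "card (Fib Q) \<le> card (Fib Q')" if QQ: "Q \<in> PS" "Q' \<in> PS" for Q Q'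
  proof -
    obtain v0 where v0: "v0 \<in> Fib Q" using nonempty[OF QQ(1)] by blast
    obtain v1 where v1: "v1 \<in> Fib Q'" using nonempty[OF QQ(2)] by blast
    define T where "T v = restrict (\<lambda>r. v r - v0 r + v1 r) {..<L}" for v
    show ?thesis
    proof (rule card_inj_on_le)
      show "finite (Fib Q')" using finV by (simp add: Fib_def)
      show "inj_on T (Fib Q)"
      proof (rule inj_onI)
        fix v u assume vu: "v \<in> Fib Q" "u \<in> Fib Q" "T v = T u"
        have "v r = u r" if "r < L" for r
        proof -
          have "T v r = T u r" using vu by simp
          then show ?thesis using that by (simp add: T_def)
        qed
        moreover have "v \<in> V" "u \<in> V" using vu(1,2) by (simp_all add: Fib_def)
        ultimately show "v = u" unfolding V_def by (intro PiE_ext[of v "{..<L}" "\<lambda>_. UNIV" u]) auto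
      qed
      show "T ` Fib Q \<subseteq> Fib Q'"
      proof
        fix y assume "y \<in> T ` Fib Q"
        then obtain v where v: "v \<in> Fib Q" and y: "y = T v" by blast
        have "T v \<in> V" by (simp add: T_def V_def)
        moreover have "good Q' (T v)"
          unfolding good_def
        proof (intro allI impI)
          fix i assume i: "i < s"
          have "code (T v) i = code v1 i" unfolding code_def
          proof (rule enc_cong)
            fix j assume j: "j < m"
            have "\<Phi> (T v) i j = \<Phi> v i j - \<Phi> v0 i j + \<Phi> v1 i j"
              unfolding \<Phi>_def T_def
              by (simp add: sum.distrib sum_subtractf ring_distribs)
            also have "\<Phi> v i j = \<Phi> v0 i j"
              by (rule samePhi[of Q v v0 i j]) (use v v0 i j in \<open>simp_all add: Fib_def\<close>)
            finally show "lam i (Suc j) (\<Phi> (T v) i j) = lam i (Suc j) (\<Phi> v1 i j)" by simp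
          qed
          then show "code (T v) i = Q' i" using v1 i by (simp add: Fib_def good_def)
        qed
        ultimately show "y \<in> Fib Q'" using y by (simp add: Fib_def)
      qed
    qed
  qed
  have fibeq: "card (Fib Q) = card (Fib P)" if "Q \<in> PS" for Q
    using fible[OF that, of P] fible[of P Q] that P by (simp add: PS_def q_def)
  have cardV: "card V = q ^ L" unfolding V_def by (simp add: card_PiE q_def)
  have cardPS: "card PS = (q ^ m) ^ s" unfolding PS_def by (simp add: card_PiE)
  have finPS: "finite PS" unfolding PS_def by (intro finite_PiE) auto
  have Vun: "V = (\<Union>Q\<in>PS. Fib Q)"
  proof
    show "V \<subseteq> (\<Union>Q\<in>PS. Fib Q)"
    proof
      fix v assume v: "v \<in> V"
      have "restrict (code v) {..<s} \<in> PS" unfolding PS_def using codelt by auto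
      moreover have "v \<in> Fib (restrict (code v) {..<s})" using v by (simp add: Fib_def good_def)
      ultimately show "v \<in> (\<Union>Q\<in>PS. Fib Q)" by blast
    qed
  qed (auto simp: Fib_def)
  have "card V = (\<Sum>Q\<in>PS. card (Fib Q))"
    unfolding Vun
  proof (rule card_UN_disjoint[OF finPS])
    show "\<forall>Q\<in>PS. finite (Fib Q)" using finV by (simp add: Fib_def)
    show "\<forall>Q\<in>PS. \<forall>Q'\<in>PS. Q \<noteq> Q' \<longrightarrow> Fib Q \<inter> Fib Q' = {}"
    proof (intro ballI impI)
      fix Q Q' assume QQ: "Q \<in> PS" "Q' \<in> PS" "Q \<noteq> Q'"
      show "Fib Q \<inter> Fib Q' = {}"
      proof (rule ccontr)
        assume "Fib Q \<inter> Fib Q' \<noteq> {}"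
        then obtain v where "v \<in> Fib Q" "v \<in> Fib Q'" by blast
        then have "Q i = Q' i" if "i < s" for i using that by (auto simp: Fib_def good_def)
        then have "Q = Q'" using QQ(1,2) unfolding PS_def by (intro PiE_ext) auto
        with QQ(3) show False by simp
      qed
    qed
  qed
  also have "\<dots> = (\<Sum>Q\<in>PS. card (Fib P))" by (rule sum.cong) (auto simp: fibeq)
  also have "\<dots> = (q ^ m) ^ s * card (Fib P)" using cardPS by simp
  finally have main: "q ^ L = (q ^ m) ^ s * card (Fib P)" using cardV by simp
  define b where "b n = tau q L (sn n)" for n
  have snlt: "sn n r < q" for n r using dg by (simp add: qadic_digits_def q_def)
  have blt: "b n < q ^ L" for n unfolding b_def by (rule tau_less) (rule snlt)
  define G where "G = {a. a < q ^ L \<and> good P (vec (nat_digits q a))}"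
  have finG: "finite G" unfolding G_def by simp
  have setEq: "{n. n < N \<and> (\<forall>i<s. enc q m (dig C psi lam (sn n) i) = P i)} = {n. n < N \<and> b n \<in> G}" for N
  proof -
    have "(\<forall>i<s. enc q m (dig C psi lam (sn n) i) = P i) \<longleftrightarrow> b n \<in> G" for n
      using K1 K2[of n] blt[of n] by (simp add: good_def G_def b_def)
    then show ?thesis by blast
  qed
  have psib: "bij_betw (psi r) {..<q} (UNIV :: 'f set)" for r using psi by (simp add: q_def)
  have ndlt: "nat_digits q a r < q" for a r using q0 by (simp add: nat_digits_def)
  define g where "g a = vec (nat_digits q a)" for a
  have cardG: "card G = card (Fib P)"
  proof -
    have inj: "inj_on g G"
    proof (rule inj_onI)
      fix a a' assume aa: "a \<in> G" "a' \<in> G" "g a = g a'"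
      have nd: "nat_digits q a r = nat_digits q a' r" if "r < L" for r
      proof -
        have "g a r = g a' r" using aa by simp
        then have "psi r (nat_digits q a r) = psi r (nat_digits q a' r)" using that by (simp add: g_def vec_def)
        then show ?thesis using bij_betw_imp_inj_on[OF psib[of r]] ndlt by (auto dest: inj_onD)
      qed
      have "a = tau q L (nat_digits q a)" using tau_digits[OF q0] aa(1) by (simp add: G_def)
      also have "\<dots> = tau q L (nat_digits q a')" unfolding tau_def by (rule sum.cong) (auto simp: nd)
      also have "\<dots> = a'" using tau_digits[OF q0] aa(2) by (simp add: G_def)
      finally show "a = a'" .
    qed
    have img: "g ` G = Fib P"
    proof
      show "g ` G \<subseteq> Fib P" by (auto simp: G_def Fib_def V_def g_def vec_def split: if_splits)
      show "Fib P \<subseteq> g ` G"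
      proof
        fix v assume v: "v \<in> Fib P"
        define d where "d r = inv_into {..<q} (psi r) (v r)" for r
        have rng: "v r \<in> psi r ` {..<q}" for r using bij_betw_imp_surj_on[OF psib[of r]] by simp
        have dlt: "d r < q" for r using inv_into_into[OF rng[of r]] by (simp add: d_def)
        have pd: "psi r (d r) = v r" for r unfolding d_def by (rule f_inv_into_f[OF rng])
        define a where "a = tau q L d"
        have alt: "a < q ^ L" unfolding a_def by (rule tau_less) (rule dlt)
        have "g a = v"
        proof
          fix r show "g a r = v r"
          proof (cases "r < L")
            case True
            then show ?thesis using digits_tau[of L d q r] dlt pd by (simp add: g_def vec_def a_def)
          next
            case False
            then have "v r = undefined" using v by (auto simp: Fib_def V_def PiE_def extensional_def)
            then show ?thesis using False by (simp add: g_def vec_def)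
          qed
        qed
        moreover have "a \<in> G" using alt \<open>g a = v\<close> v by (simp add: G_def Fib_def g_def)
        ultimately show "v \<in> g ` G" by blast
      qed
    qed
    show ?thesis using card_image[OF inj] img by simp
  qed
  have each: "(\<lambda>N. real (card {n. n < N \<and> b n = a}) / real N) \<longlonglongrightarrow> 1 / real q ^ L" if "a \<in> G" for a
  proof -
    have a: "a < q ^ L" using that by (simp add: G_def)
    have "(\<lambda>N. real (card {n. n < N \<and> tau q L (sn n) mod q ^ L = a mod q ^ L}) / real N) \<longlonglongrightarrow> 1 / real q ^ L"
      using ud L1 a by (simp add: ud_qadic_def q_def)
    moreover have "{n. n < N \<and> tau q L (sn n) mod q ^ L = a mod q ^ L} = {n. n < N \<and> b n = a}" for N
      using blt a by (simp add: b_def)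
    ultimately show ?thesis by simp
  qed
  have lim: "(\<lambda>N. \<Sum>a\<in>G. real (card {n. n < N \<and> b n = a}) / real N) \<longlonglongrightarrow> (\<Sum>a\<in>G. 1 / real q ^ L)"
    by (rule tendsto_sum) (rule each)
  have eqf: "real (card {n. n < N \<and> b n \<in> G}) / real N = (\<Sum>a\<in>G. real (card {n. n < N \<and> b n = a}) / real N)" for N
    by (simp add: card_split1[OF finG] sum_divide_distrib)
  have val: "(\<Sum>a\<in>G. 1 / real q ^ L) = 1 / real (q ^ m) ^ s"
  proof -
    have m': "real q ^ L = real (q ^ m) ^ s * real (card (Fib P))"
      using arg_cong[OF main, of real] by simp
    have cpos: "card (Fib P) > 0" using main q0 by (metis mult_0_right not_gr0 power_not_zero zero_less_iff_neq_zero)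
    have "(\<Sum>a\<in>G. 1 / real q ^ L) = real (card (Fib P)) / real q ^ L" using cardG by simp
    also have "\<dots> = 1 / real (q ^ m) ^ s" unfolding m' using cpos by simp
    finally show ?thesis .
  qed
  show ?thesis
    unfolding q_def[symmetric] setEq eqf using lim val by simp
qed

theorem theorem1:
  fixes s :: nat
    and C :: "nat \<Rightarrow> nat \<Rightarrow> nat \<Rightarrow> 'f::{field,finite}"
    and sn :: "nat \<Rightarrow> nat \<Rightarrow> nat"
  assumes "s \<ge> 1"
    and "\<forall>i<s. finite_row (C i)"
    and "\<forall>n. qadic_digits CARD('f) (sn n)"
    and "ud_qadic CARD('f) sn"
    and "\<exists>psi1 lam1.
           (\<forall>r. bij_betw (psi1 r) {..<CARD('f)} (UNIV :: 'f set))
         \<and> (\<exists>R. \<forall>r\<ge>R. psi1 r 0 = 0)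
         \<and> (\<forall>i<s. \<forall>j\<ge>1. bij_betw (lam1 i j) (UNIV :: 'f set) {..<CARD('f)})
         \<and> ud_cube s (\<lambda>n i. gen_coord C psi1 lam1 (nat_digits CARD('f) n) i)"
  shows "\<forall>psi lam.
           (\<forall>r. bij_betw (psi r) {..<CARD('f)} (UNIV :: 'f set))
         \<and> (\<forall>i<s. \<forall>j\<ge>1. bij_betw (lam i j) (UNIV :: 'f set) {..<CARD('f)})
         \<longrightarrow> ud_cube s (\<lambda>n i. gen_coord C psi lam (sn n) i)"
proof (intro allI impI)
  fix psi :: "nat \<Rightarrow> nat \<Rightarrow> 'f" and lam :: "nat \<Rightarrow> nat \<Rightarrow> 'f \<Rightarrow> nat"
  assume H: "(\<forall>r. bij_betw (psi r) {..<CARD('f)} (UNIV :: 'f set))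
         \<and> (\<forall>i<s. \<forall>j\<ge>1. bij_betw (lam i j) (UNIV :: 'f set) {..<CARD('f)})"
  then have psi: "\<forall>r. bij_betw (psi r) {..<CARD('f)} (UNIV :: 'f set)"
    and lam: "\<forall>i<s. \<forall>j\<ge>1. bij_betw (lam i j) (UNIV :: 'f set) {..<CARD('f)}" by auto
  obtain psi1 lam1 where lam1: "\<forall>i<s. \<forall>j\<ge>1. bij_betw (lam1 i j) (UNIV :: 'f set) {..<CARD('f)}"
    and ud1: "ud_cube s (\<lambda>n i. gen_coord C psi1 lam1 (nat_digits CARD('f) n) i)"
    using assms(5) by blast
  show "ud_cube s (\<lambda>n i. gen_coord C psi lam (sn n) i)"
  proof (rule lemmaB[where q="CARD('f)" and pat="\<lambda>m n i. enc CARD('f) m (dig C psi lam (sn n) i)"])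
    show "CARD('f) \<ge> 2" by (rule card_field_ge2)
  next
    fix m n i assume i: "i < s"
    show "enc CARD('f) m (dig C psi lam (sn n) i) < CARD('f) ^ m"
      by (rule point_bounds(3)[OF lam i])
    show "real (enc CARD('f) m (dig C psi lam (sn n) i)) / real CARD('f) ^ m \<le> gen_coord C psi lam (sn n) i"
      by (rule point_bounds(1)[OF lam i])
    show "gen_coord C psi lam (sn n) i \<le> (real (enc CARD('f) m (dig C psi lam (sn n) i)) + 1) / real CARD('f) ^ m"
      by (rule point_bounds(2)[OF lam i])
  next
    fix m P assume P: "P \<in> PiE {..<s} (\<lambda>_. {..<CARD('f) ^ m})"
    obtain L where L1: "L \<ge> 1" and L: "\<forall>i<s. \<forall>j<m. {r. C i (Suc j) r \<noteq> 0} \<subseteq> {..<L}"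
      using support_bound[OF assms(2), of m] by blast
    have sur: "\<forall>w. \<exists>v. \<forall>i<s. \<forall>j<m. (\<Sum>r<L. C i (Suc j) r * v r) = w i j"
      by (rule surjA[OF lam1 ud1 L])
    show "(\<lambda>N. real (card {n. n < N \<and> (\<forall>i<s. enc CARD('f) m (dig C psi lam (sn n) i) = P i)}) / real N)
        \<longlonglongrightarrow> 1 / real (CARD('f) ^ m) ^ s"
      by (rule freqB[OF psi lam assms(3) assms(4) L1 L sur P])
  qed
qed

end
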